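(* Let $B$ be a finite-dimensional abelian Lie algebra over a field $\mathbb{K}$ of characteristic zero and let $w\colon B\times B\to B^*$ be a cyclic $2$-cocycle. Then $(T^*_wB)^2=\mathrm{span}\langle w(b,b'):b,b'\in B\rangle$ and $Z(T^*_wB)=\mathrm{rad}\,w\oplus B^*$. Hence $T^*_wB$ is $2$-step nilpotent if and only if $w\neq0$. Moreover the following are equivalent: (a) $(T^*_wB,q_B)$ is reduced; (b) $w$ is non-degenerate; (c) $B^*=\mathrm{span}\langle w(b,b'):b,b'\in B\rangle$.
   Context: For a bilinear map $w\colon B\times B\to B^*$: $\mathrm{rad}\,w=\{b\in B:w(b,\cdot)=0\}$ and $w$ is non-degenerate if $\mathrm{rad}\,w=0$; $w$ is cyclic if $w(a,b)(c)=w(c,a)(b)=w(b,c)(a)$; $w$ is a $2$-cocycle (coadjoint coefficients) if $w$ is skew-symmetric and $\sum_{\mathrm{cyc}}w([a,b],c)=\sum_{\mathrm{cyc}}\mathrm{ad}^*(a)w(b,c)$, $\mathrm{ad}^*(a)(\beta)(a')=-\beta([a,a'])$. The $T^*$-extension $T^*_wB$ is $B\oplus B^*$ with bracket $[b+\beta,b'+\beta']=[b,b']_B+w(b,b')+\mathrm{ad}^*(b)(\beta')-\mathrm{ad}^*(b')(\beta)$ (here, $B$ abelian, simply $w(b,b')$) and form $q_B(b+\beta,b'+\beta')=\beta(b')+\beta'(b)$. A Lie algebra $L$ is reduced if $Z(L)\subseteq[L,L]$; $2$-step nilpotent means $[L,[L,L]]=0\ne[L,L]$. *)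

theory Defs
  imports Main "HOL.Vector_Spaces" "HOL-Library.Function_Algebras" "HOL-Library.Product_Plus"
begin

text \<open>A bilinear map
  w : B \<times> B \<rightarrow> B* is a curried function w a b c = w(a,b)(c).  A Lie bracket on B is a
  function br :: 'b \<Rightarrow> 'b \<Rightarrow> 'b (for abelian B: br = (\<lambda>_ _. 0)).\<close>

definition dual_space :: "('k::field \<Rightarrow> 'b::ab_group_add \<Rightarrow> 'b) \<Rightarrow> ('b \<Rightarrow> 'k) set" where
  "dual_space scale = {f. Vector_Spaces.linear scale (*) f}"

definition fscale :: "'k::field \<Rightarrow> ('b \<Rightarrow> 'k) \<Rightarrow> ('b \<Rightarrow> 'k)" where
  "fscale c f = (\<lambda>x. c * f x)"

definition pscale :: "('k::field \<Rightarrow> 'b::ab_group_add \<Rightarrow> 'b) \<Rightarrow> 'k \<Rightarrow> 'b \<times> ('b \<Rightarrow> 'k) \<Rightarrow> 'b \<times> ('b \<Rightarrow> 'k)" where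
  "pscale scale c p = (scale c (fst p), fscale c (snd p))"

definition bilinear_dual :: "('k::field \<Rightarrow> 'b::ab_group_add \<Rightarrow> 'b) \<Rightarrow> ('b \<Rightarrow> 'b \<Rightarrow> 'b \<Rightarrow> 'k) \<Rightarrow> bool" where
  "bilinear_dual scale w \<longleftrightarrow>
     (\<forall>b c. Vector_Spaces.linear scale (*) (\<lambda>a. w a b c)) \<and>
     (\<forall>a c. Vector_Spaces.linear scale (*) (\<lambda>b. w a b c)) \<and>
     (\<forall>a b. w a b \<in> dual_space scale)"

definition rad :: "('b::zero \<Rightarrow> 'b \<Rightarrow> 'b \<Rightarrow> 'k::zero) \<Rightarrow> 'b set" where
  "rad w = {b. \<forall>b'. w b b' = 0}"

definition nondegenerate :: "('b::zero \<Rightarrow> 'b \<Rightarrow> 'b \<Rightarrow> 'k::zero) \<Rightarrow> bool" where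
  "nondegenerate w \<longleftrightarrow> rad w = {0}"

definition cyclic :: "('b \<Rightarrow> 'b \<Rightarrow> 'b \<Rightarrow> 'k) \<Rightarrow> bool" where
  "cyclic w \<longleftrightarrow> (\<forall>a b c. w a b c = w c a b \<and> w c a b = w b c a)"

definition ad_star :: "('b \<Rightarrow> 'b \<Rightarrow> 'b) \<Rightarrow> 'b \<Rightarrow> ('b \<Rightarrow> 'k::ab_group_add) \<Rightarrow> ('b \<Rightarrow> 'k)" where
  "ad_star br a \<beta> = (\<lambda>a'. - \<beta> (br a a'))"

definition cocycle2 :: "('b \<Rightarrow> 'b \<Rightarrow> 'b) \<Rightarrow> ('b \<Rightarrow> 'b \<Rightarrow> 'b \<Rightarrow> 'k::ab_group_add) \<Rightarrow> bool" where
  "cocycle2 br w \<longleftrightarrow>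
     (\<forall>a b. w a b = - w b a) \<and>
     (\<forall>a b c. w (br a b) c + w (br b c) a + w (br c a) b
              = ad_star br a (w b c) + ad_star br b (w c a) + ad_star br c (w a b))"

definition tstar_carrier :: "('k::field \<Rightarrow> 'b::ab_group_add \<Rightarrow> 'b) \<Rightarrow> ('b \<times> ('b \<Rightarrow> 'k)) set" where
  "tstar_carrier scale = UNIV \<times> dual_space scale"

definition tstar_bracket :: "('b \<Rightarrow> 'b \<Rightarrow> 'b) \<Rightarrow> ('b \<Rightarrow> 'b \<Rightarrow> 'b \<Rightarrow> 'k::ab_group_add)
     \<Rightarrow> 'b \<times> ('b \<Rightarrow> 'k) \<Rightarrow> 'b \<times> ('b \<Rightarrow> 'k) \<Rightarrow> 'b \<times> ('b \<Rightarrow> 'k)" where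
  "tstar_bracket br w x y =
     (br (fst x) (fst y), w (fst x) (fst y) + ad_star br (fst x) (snd y) - ad_star br (fst y) (snd x))"

definition q_form :: "'b \<times> ('b \<Rightarrow> 'k::plus) \<Rightarrow> 'b \<times> ('b \<Rightarrow> 'k) \<Rightarrow> 'k" where
  "q_form x y = snd x (fst y) + snd y (fst x)"

definition lie_prod :: "('k::field \<Rightarrow> 'v::ab_group_add \<Rightarrow> 'v) \<Rightarrow> ('v \<Rightarrow> 'v \<Rightarrow> 'v) \<Rightarrow> 'v set \<Rightarrow> 'v set \<Rightarrow> 'v set" where
  "lie_prod sc brk A C = module.span sc {brk x y | x y. x \<in> A \<and> y \<in> C}"

definition lie_center :: "('v \<Rightarrow> 'v \<Rightarrow> 'v::zero) \<Rightarrow> 'v set \<Rightarrow> 'v set" where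
  "lie_center brk L = {x \<in> L. \<forall>y \<in> L. brk x y = 0}"

definition lie_reduced :: "('k::field \<Rightarrow> 'v::ab_group_add \<Rightarrow> 'v) \<Rightarrow> ('v \<Rightarrow> 'v \<Rightarrow> 'v) \<Rightarrow> 'v set \<Rightarrow> bool" where
  "lie_reduced sc brk L \<longleftrightarrow> lie_center brk L \<subseteq> lie_prod sc brk L L"

definition two_step_nilpotent :: "('k::field \<Rightarrow> 'v::ab_group_add \<Rightarrow> 'v) \<Rightarrow> ('v \<Rightarrow> 'v \<Rightarrow> 'v) \<Rightarrow> 'v set \<Rightarrow> bool" where
  "two_step_nilpotent sc brk L \<longleftrightarrow>
     lie_prod sc brk L (lie_prod sc brk L L) = {0} \<and> lie_prod sc brk L L \<noteq> {0}"

end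

theory Submission
  imports Defs
begin

lemma vs_fscale: "vector_space (fscale :: 'k::field \<Rightarrow> ('a \<Rightarrow> 'k) \<Rightarrow> ('a \<Rightarrow> 'k))"
  by unfold_locales (auto simp: fscale_def fun_eq_iff algebra_simps)

lemma vs_mult: "vector_space ((*) :: 'k::field \<Rightarrow> 'k \<Rightarrow> 'k)"
  by unfold_locales (auto simp: algebra_simps)

lemma vs_pscale:
  assumes "vector_space scale"
  shows "vector_space (pscale scale)"
proof -
  interpret V: vector_space scale by fact
  show ?thesis
    by unfold_locales
      (auto simp: pscale_def fscale_def fun_eq_iff algebra_simps V.scale_right_distrib V.scale_left_distrib)
qed

lemma sum_fun_app: "(\<Sum>x\<in>A. f x) y = (\<Sum>x\<in>A. f x y)"
  by (induction A rule: infinite_finite_induct) auto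

lemma lin_parts:
  assumes "Vector_Spaces.linear s1 s2 f"
  shows "f (x + y) = f x + f y" "f (s1 c x) = s2 c (f x)"
  using assms unfolding linear_iff by auto

lemma lin_zero:
  assumes "Vector_Spaces.linear s1 s2 f"
  shows "f 0 = 0"
proof -
  have "f (0 + 0) = f 0 + f 0" by (rule lin_parts(1)[OF assms])
  then show ?thesis by simp
qed

lemma span_prod:
  assumes V: "vector_space scale"
  shows "module.span (pscale scale) ({0} \<times> S) = {0} \<times> module.span (fscale :: 'k::field \<Rightarrow> _) S"
proof -
  interpret V: vector_space scale by fact
  interpret P: vector_space "pscale scale" by (rule vs_pscale[OF V])
  interpret F: vector_space "fscale :: 'k \<Rightarrow> ('b \<Rightarrow> 'k) \<Rightarrow> _" by (rule vs_fscale)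
  show ?thesis
  proof
    show "P.span ({0} \<times> S) \<subseteq> {0} \<times> F.span S"
    proof (rule P.span_minimal)
      show "{0} \<times> S \<subseteq> {0} \<times> F.span S" using F.span_base by auto
      show "P.subspace ({0} \<times> F.span S)"
        by (rule P.subspaceI) (auto simp: pscale_def zero_prod_def F.span_zero F.span_add F.span_scale)
    qed
    show "{0} \<times> F.span S \<subseteq> P.span ({0} \<times> S)"
    proof -
      have "F.span S \<subseteq> {f. (0, f) \<in> P.span ({0} \<times> S)}"
      proof (rule F.span_minimal)
        show "S \<subseteq> {f. (0, f) \<in> P.span ({0} \<times> S)}" using P.span_base by auto
        show "F.subspace {f. (0, f) \<in> P.span ({0} \<times> S)}"
        proof (rule F.subspaceI)
          show "0 \<in> {f. (0, f) \<in> P.span ({0} \<times> S)}"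
            using P.span_zero by (simp add: zero_prod_def[symmetric])
          fix x y assume "x \<in> {f. (0, f) \<in> P.span ({0} \<times> S)}" "y \<in> {f. (0, f) \<in> P.span ({0} \<times> S)}"
          then show "x + y \<in> {f. (0, f) \<in> P.span ({0} \<times> S)}"
            using P.span_add[of "(0,x)" _ "(0,y)"] by simp
        next
          fix c x assume "x \<in> {f. (0, f) \<in> P.span ({0} \<times> S)}"
          then show "fscale c x \<in> {f. (0, f) \<in> P.span ({0} \<times> S)}"
            using P.span_scale[of "(0,x)" _ c] by (simp add: pscale_def)
        qed
      qed
      then show ?thesis by auto
    qed
  qed
qed


theorem corollary2p23:
  fixes scale :: "'k::field_char_0 \<Rightarrow> 'b::ab_group_add \<Rightarrow> 'b"
    and Basis :: "'b set"
    and w :: "'b \<Rightarrow> 'b \<Rightarrow> 'b \<Rightarrow> 'k"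
  defines "br \<equiv> (\<lambda>(_::'b) (_::'b). (0::'b))"
  defines "T \<equiv> tstar_carrier scale"
    and "brT \<equiv> tstar_bracket br w"
    and "scT \<equiv> pscale scale"
    and "W \<equiv> module.span fscale {w b b' | b b'. True}"
  assumes fd: "finite_dimensional_vector_space scale Basis"
    and bil: "bilinear_dual scale w"
    and cyc: "cyclic w"
    and coc: "cocycle2 br w"
  shows "lie_prod scT brT T T = {0} \<times> W \<and>
         lie_center brT T = rad w \<times> dual_space scale \<and>
         (two_step_nilpotent scT brT T \<longleftrightarrow> w \<noteq> (\<lambda>_ _. 0)) \<and>
         (lie_reduced scT brT T \<longleftrightarrow> nondegenerate w) \<and>
         (nondegenerate w \<longleftrightarrow> dual_space scale = W)"
proof -
  interpret V: finite_dimensional_vector_space scale Basis by (rule fd)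
  have Vvs: "vector_space scale" by unfold_locales
  interpret P: vector_space "pscale scale" by (rule vs_pscale[OF Vvs])
  interpret F: vector_space "fscale :: 'k \<Rightarrow> ('b \<Rightarrow> 'k) \<Rightarrow> _" by (rule vs_fscale)
  interpret VP: vector_space_pair scale "(*) :: 'k \<Rightarrow> 'k \<Rightarrow> 'k"
    using Vvs vs_mult by (simp add: vector_space_pair_def)
  have lin1: "Vector_Spaces.linear scale (*) (\<lambda>a. w a b c)" for b c
    using bil unfolding bilinear_dual_def by blast
  have lin2: "Vector_Spaces.linear scale (*) (\<lambda>b. w a b c)" for a c
    using bil unfolding bilinear_dual_def by blast
  have wdual: "w a b \<in> dual_space scale" for a b
    using bil unfolding bilinear_dual_def by blast
  have dual0: "f 0 = 0" if "f \<in> dual_space scale" for f :: "'b \<Rightarrow> 'k"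
    using that lin_zero unfolding dual_space_def by blast
  have zero_dual: "(0 :: 'b \<Rightarrow> 'k) \<in> dual_space scale"
    unfolding dual_space_def linear_iff using Vvs vs_mult by auto
  have w0l: "w 0 b = 0" for b
    using lin_zero[OF lin1] by (auto simp: fun_eq_iff)
  have w0r: "w a 0 = 0" for a
    using lin_zero[OF lin2] by (auto simp: fun_eq_iff)
  have cyc1: "w a b c = w c a b" for a b c using cyc unfolding cyclic_def by blast
  have adz: "ad_star br a \<beta> = 0" if "\<beta> 0 = 0" for a and \<beta> :: "'b \<Rightarrow> 'k"
    using that by (auto simp: ad_star_def br_def fun_eq_iff)
  have dsub: "F.subspace (dual_space scale)"
  proof (rule F.subspaceI)
    show "0 \<in> dual_space scale" by (rule zero_dual)
    fix x y :: "'b \<Rightarrow> 'k" assume "x \<in> dual_space scale" "y \<in> dual_space scale"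
    then have "x (u + v) = x u + x v" "y (u + v) = y u + y v"
      "x (scale a u) = a * x u" "y (scale a u) = a * y u" for u v a
      unfolding dual_space_def linear_iff by auto
    then show "x + y \<in> dual_space scale"
      unfolding dual_space_def linear_iff using Vvs vs_mult by (simp add: distrib_left)
  next
    fix c and x :: "'b \<Rightarrow> 'k" assume "x \<in> dual_space scale"
    then have "x (u + v) = x u + x v" "x (scale a u) = a * x u" for u v a
      unfolding dual_space_def linear_iff by auto
    then show "fscale c x \<in> dual_space scale"
      unfolding dual_space_def linear_iff using Vvs vs_mult
      by (simp add: fscale_def distrib_left mult.left_commute)
  qed
  have Wdual: "W \<subseteq> dual_space scale"
    unfolding W_def by (rule F.span_minimal[OF _ dsub]) (auto intro: wdual)
  have brT_T: "brT x y = (0, w (fst x) (fst y))" if "x \<in> T" "y \<in> T" for x y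
    using that dual0 adz by (auto simp: brT_def tstar_bracket_def T_def tstar_carrier_def br_def)
  have gens: "{brT x y | x y. x \<in> T \<and> y \<in> T} = {0} \<times> {w b b' | b b'. True}"
  proof
    show "{brT x y | x y. x \<in> T \<and> y \<in> T} \<subseteq> {0} \<times> {w b b' | b b'. True}"
      using brT_T by fastforce
    show "{0} \<times> {w b b' | b b'. True} \<subseteq> {brT x y | x y. x \<in> T \<and> y \<in> T}"
    proof clarify
      fix b b'
      have "(b, 0) \<in> T" "(b', 0) \<in> T" using zero_dual by (auto simp: T_def tstar_carrier_def)
      moreover from this have "brT (b, 0) (b', 0) = (0, w b b')" using brT_T by simp
      ultimately show "\<exists>x y. (0, w b b') = brT x y \<and> x \<in> T \<and> y \<in> T"
        by metis
    qed
  qed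
  have C1: "lie_prod scT brT T T = {0} \<times> W"
    unfolding lie_prod_def gens scT_def W_def by (rule span_prod[OF Vvs])
  have C2: "lie_center brT T = rad w \<times> dual_space scale"
  proof
    show "lie_center brT T \<subseteq> rad w \<times> dual_space scale"
    proof clarify
      fix a \<beta> assume H: "(a, \<beta>) \<in> lie_center brT T"
      then have aT: "(a, \<beta>) \<in> T" by (auto simp: lie_center_def)
      have "w a b' = 0" for b'
      proof -
        have "(b', 0) \<in> T" using zero_dual by (auto simp: T_def tstar_carrier_def)
        then have "brT (a, \<beta>) (b', 0) = 0" using H by (auto simp: lie_center_def)
        then show ?thesis using brT_T[OF aT \<open>(b', 0) \<in> T\<close>] by (simp add: zero_prod_def)
      qed
      then show "a \<in> rad w \<and> \<beta> \<in> dual_space scale"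
        using aT by (auto simp: rad_def T_def tstar_carrier_def)
    qed
    show "rad w \<times> dual_space scale \<subseteq> lie_center brT T"
      using brT_T by (auto simp: lie_center_def rad_def T_def tstar_carrier_def zero_prod_def)
  qed
  have C3: "two_step_nilpotent scT brT T \<longleftrightarrow> w \<noteq> (\<lambda>_ _. 0)"
  proof -
    have "lie_prod scT brT T (lie_prod scT brT T T) = {0}"
    proof -
      have "{brT x y | x y. x \<in> T \<and> y \<in> {0} \<times> W} \<subseteq> {0}"
      proof
        fix z assume "z \<in> {brT x y | x y. x \<in> T \<and> y \<in> {0} \<times> W}"
        then obtain x f where z: "z = brT x (0, f)" "x \<in> T" "f \<in> W" by auto
        then have "f 0 = 0" "snd x 0 = 0" using Wdual dual0 by (auto simp: T_def tstar_carrier_def)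
        then show "z \<in> {0}"
          using adz z(1) by (simp add: brT_def tstar_bracket_def w0r br_def zero_prod_def)
      qed
      then have "P.span {brT x y | x y. x \<in> T \<and> y \<in> {0} \<times> W} \<subseteq> {0}"
        by (intro P.span_minimal) auto
      then have "P.span {brT x y | x y. x \<in> T \<and> y \<in> {0} \<times> W} = {0}"
        using P.span_zero[of "{brT x y | x y. x \<in> T \<and> y \<in> {0} \<times> W}"] by auto
      then show ?thesis unfolding C1 unfolding lie_prod_def scT_def .
    qed
    moreover have "W \<noteq> {0} \<longleftrightarrow> w \<noteq> (\<lambda>_ _. 0)"
    proof
      assume "W \<noteq> {0}"
      show "w \<noteq> (\<lambda>_ _. 0)"
      proof
        assume w0: "w = (\<lambda>_ _. 0)"
        have "W \<subseteq> {0}" unfolding W_def by (rule F.span_minimal) (auto simp: w0)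
        then show False using \<open>W \<noteq> {0}\<close> F.span_zero unfolding W_def by blast
      qed
    next
      assume "w \<noteq> (\<lambda>_ _. 0)"
      then obtain a b where "w a b \<noteq> 0" by (auto simp: fun_eq_iff)
      moreover have "w a b \<in> W" unfolding W_def by (rule F.span_base) auto
      ultimately show "W \<noteq> {0}" by auto
    qed
    ultimately show ?thesis unfolding two_step_nilpotent_def C1 by (auto simp: zero_prod_def)
  qed
  have rad0: "0 \<in> rad w" by (simp add: rad_def w0l)
  have annW: "(\<forall>f\<in>W. f c = 0) \<longleftrightarrow> c \<in> rad w" for c
  proof
    assume H: "\<forall>f\<in>W. f c = 0"
    have "w c a b = 0" for a b
    proof -
      have "w a b \<in> W" unfolding W_def by (rule F.span_base) auto
      then show ?thesis using H cyc1[of a b c] by auto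
    qed
    then show "c \<in> rad w" by (auto simp: rad_def fun_eq_iff)
  next
    assume "c \<in> rad w"
    then have "w a b c = 0" for a b using cyc1[of a b c] by (auto simp: rad_def)
    then have "W \<subseteq> {f. f c = 0}" unfolding W_def
      by (intro F.span_minimal F.subspaceI) (auto simp: fscale_def)
    then show "\<forall>f\<in>W. f c = 0" by auto
  qed
  have C5: "nondegenerate w \<longleftrightarrow> dual_space scale = W"
  proof
    assume nd: "nondegenerate w"
    show "dual_space scale = W"
    proof
      show "W \<subseteq> dual_space scale" by (rule Wdual)
      show "dual_space scale \<subseteq> W"
      proof
        fix f assume fD: "f \<in> dual_space scale"
        define G where "G = (\<lambda>(e,e'). w e e') ` (Basis \<times> Basis)"
        have finG: "finite G" unfolding G_def using V.finite_Basis by simp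
        have GW: "G \<subseteq> W"
        proof
          fix g assume "g \<in> G"
          then obtain e e' where "g = w e e'" by (auto simp: G_def)
          then show "g \<in> W" unfolding W_def by (intro F.span_base) blast
        qed
        interpret F2: vector_space "fscale :: 'k \<Rightarrow> (('b\<Rightarrow>'k)\<Rightarrow>'k) \<Rightarrow> _" by (rule vs_fscale)
        interpret VP2: vector_space_pair scale "fscale :: 'k \<Rightarrow> (('b\<Rightarrow>'k)\<Rightarrow>'k) \<Rightarrow> _"
          using Vvs vs_fscale by (simp add: vector_space_pair_def)
        interpret VP3: vector_space_pair "fscale :: 'k \<Rightarrow> (('b\<Rightarrow>'k)\<Rightarrow>'k) \<Rightarrow> _" "(*) :: 'k \<Rightarrow> 'k \<Rightarrow> 'k"
          using vs_mult vs_fscale by (simp add: vector_space_pair_def)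
        define A where "A = (\<lambda>c. (\<lambda>g. if g \<in> G then g c else 0) :: ('b\<Rightarrow>'k)\<Rightarrow>'k)"
        have Gd: "g \<in> dual_space scale" if "g \<in> G" for g using that wdual by (auto simp: G_def)
        have glin: "g (u + v) = g u + g v" "g (scale a u) = a * g u" if "g \<in> G" for g u v a
          using Gd[OF that] unfolding dual_space_def linear_iff by auto
        have linA: "Vector_Spaces.linear scale fscale A"
          unfolding linear_iff A_def using Vvs vs_fscale glin
          by (auto simp: fun_eq_iff fscale_def)
        have extB: "w b b' c = 0" if H: "\<forall>e\<in>Basis. \<forall>e'\<in>Basis. w e e' c = 0" for b b' c
        proof -
          have s1: "w b e' c = 0" if "e' \<in> Basis" for b e'
          proof -
            have "V.span Basis \<subseteq> {x. (\<lambda>a. w a e' c) x = 0}"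
              by (rule V.span_minimal) (use that H VP.linear_subspace_kernel[OF lin1] in auto)
            then show ?thesis using V.span_Basis by auto
          qed
          have "V.span Basis \<subseteq> {x. (\<lambda>b'. w b b' c) x = 0}"
            by (rule V.span_minimal) (use s1 VP.linear_subspace_kernel[OF lin2] in auto)
          then show ?thesis using V.span_Basis by auto
        qed
        have injA: "inj A"
          unfolding VP2.linear_inj_iff_eq_0[OF linA]
        proof (intro allI impI)
          fix c assume Ac: "A c = 0"
          have "g c = 0" if "g \<in> G" for g using fun_cong[OF Ac, of g] that by (simp add: A_def)
          then have "\<forall>e\<in>Basis. \<forall>e'\<in>Basis. w e e' c = 0" by (auto simp: G_def)
          then have "w b b' c = 0" for b b' using extB by blast
          then have "c \<in> rad w" using cyc1 by (auto simp: rad_def fun_eq_iff)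
          then show "c = 0" using nd by (auto simp: nondegenerate_def)
        qed
        obtain L where linL: "Vector_Spaces.linear fscale scale L" and LA: "L \<circ> A = id"
          using VP2.linear_injective_left_inverse[OF linA injA] by blast
        define \<delta> where "\<delta> = (\<lambda>g::'b\<Rightarrow>'k. (\<lambda>h::'b\<Rightarrow>'k. if h = g then (1::'k) else 0))"
        have Aexp: "A c = (\<Sum>g\<in>G. fscale (g c) (\<delta> g))" for c
        proof (rule ext)
          fix h :: "'b \<Rightarrow> 'k"
          have "(\<Sum>g\<in>G. fscale (g c) (\<delta> g)) h = (\<Sum>g\<in>G. if h = g then g c else 0)"
            unfolding sum_fun_app by (rule sum.cong) (auto simp: fscale_def \<delta>_def)
          also have "\<dots> = (if h \<in> G then h c else 0)"
            using finG by (simp add: sum.delta')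
          finally show "A c h = (\<Sum>g\<in>G. fscale (g c) (\<delta> g)) h" by (simp add: A_def)
        qed
        have linfL: "Vector_Spaces.linear fscale (*) (f \<circ> L)"
          using Vector_Spaces.linear_compose[OF linL] fD by (simp add: dual_space_def)
        have fc: "f c = (\<Sum>g\<in>G. g c * f (L (\<delta> g)))" for c
        proof -
          have "L (A c) = c" using fun_cong[OF LA, of c] by simp
          then have "f c = (f \<circ> L) (A c)" by simp
          also have "\<dots> = (\<Sum>g\<in>G. (f \<circ> L) (fscale (g c) (\<delta> g)))"
            unfolding Aexp by (rule VP3.linear_sum[OF linfL])
          also have "\<dots> = (\<Sum>g\<in>G. g c * (f \<circ> L) (\<delta> g))"
            by (simp only: VP3.linear_scale[OF linfL])
          finally show ?thesis by simp
        qed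
        have "f = (\<Sum>g\<in>G. fscale (f (L (\<delta> g))) g)"
        proof (rule ext)
          fix c
          have Y: "(\<Sum>g\<in>G. fscale (f (L (\<delta> g))) g) c = (\<Sum>g\<in>G. g c * f (L (\<delta> g)))"
            unfolding sum_fun_app by (simp add: fscale_def mult.commute)
          show "f c = (\<Sum>g\<in>G. fscale (f (L (\<delta> g))) g) c"
            by (rule trans[OF fc[of c] sym[OF Y]])
        qed
        moreover have "(\<Sum>g\<in>G. fscale (f (L (\<delta> g))) g) \<in> W"
          unfolding W_def by (intro F.span_sum F.span_scale) (use GW[unfolded W_def] in auto)
        ultimately show "f \<in> W" by simp
      qed
    qed
  next
    assume DW: "dual_space scale = W"
    show "nondegenerate w"
      unfolding nondegenerate_def
    proof (rule ccontr)
      assume "rad w \<noteq> {0}"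
      then obtain c where c: "c \<in> rad w" "c \<noteq> 0" using rad0 by blast
      have ind: "V.independent {c}" using c(2) by (intro V.independent_insertI V.independent_empty) auto
      let ?f = "VP.construct {c} (\<lambda>_. 1)"
      have "?f \<in> dual_space scale" unfolding dual_space_def using VP.linear_construct[OF ind] by simp
      then have "?f c = 0" using annW c(1) DW by auto
      moreover have "?f c = 1" using VP.construct_basis[OF ind] by simp
      ultimately show False by simp
    qed
  qed
  have C4: "lie_reduced scT brT T \<longleftrightarrow> nondegenerate w"
    unfolding lie_reduced_def C1 C2 using C5 Wdual rad0 zero_dual
    by (auto simp: nondegenerate_def)
  show ?thesis using C1 C2 C3 C4 C5 by blast
qed

end
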